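(* Let $q$ be an odd prime power, let $s,t\ge0$ and $k\ge1$ be integers and $n=2k$. Let $\delta,\gamma\in\mathbb{F}_{q^k}$, let $\alpha\in\mathbb{F}_{q^n}$ satisfy $\alpha^{q^k}=-\alpha$ and $\beta\in\mathbb{F}_{q^n}$ satisfy $\beta^{q^k}=-\beta$. Then $$f(x)=\alpha(x^{q^k}+x+\delta)^t+\beta\,\mathrm{Tr}(x)+\gamma x^{q^s}$$ is a permutation polynomial of $\mathbb{F}_{q^n}$ if and only if $\gamma\neq0$.
   Context: $\mathrm{Tr}$ denotes the trace function from $\mathbb{F}_{q^n}$ to $\mathbb{F}_q$, $\mathrm{Tr}(x)=x+x^q+\cdots+x^{q^{n-1}}$. A permutation polynomial of $\mathbb{F}_{q^n}$ is one inducing a bijection of $\mathbb{F}_{q^n}$. *)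

theory Defs
  imports "HOL-Number_Theory.Number_Theory"
begin

definition field_trace :: "nat \<Rightarrow> nat \<Rightarrow> 'a::field \<Rightarrow> 'a" where
  "field_trace q n x = (\<Sum>i<n. x ^ (q ^ i))"

end

theory Submission
  imports Defs "HOL-Computational_Algebra.Polynomial"
begin

lemma ff_pow_card:
  fixes x :: "'a :: {field,finite}"
  shows "x ^ card (UNIV :: 'a set) = x"
proof (cases "x = 0")
  case False
  have "x * (\<Prod>y\<in>UNIV-{0}. x * y) = x * x ^ (card (UNIV :: 'a set) - 1) * \<Prod>(UNIV-{0})"
    by (simp add: prod.distrib mult_ac)
  also have "x * x ^ (card (UNIV :: 'a set) - 1) = x ^ Suc (card (UNIV :: 'a set) - 1)"
    by (subst power_Suc) auto
  also have "Suc (card (UNIV :: 'a set) - 1) = card (UNIV :: 'a set)"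
    using finite_UNIV_card_ge_0[where ?'a = 'a] by simp
  also have "(\<Prod>y\<in>UNIV-{0}. x * y) = (\<Prod>y\<in>UNIV-{0}. y)"
    by (rule prod.reindex_bij_witness[of _ "\<lambda>y. y / x" "\<lambda>y. x * y"]) (use False in auto)
  finally show ?thesis
    by simp
qed (use finite_UNIV_card_ge_0[where ?'a = 'a] in auto)

lemma char_setup:
  assumes "primepow q" "card (UNIV :: 'a :: {field,finite} set) = q ^ n" "n > 0"
  shows "prime CHAR('a) \<and> (\<exists>m. q = CHAR('a) ^ m)"
proof -
  obtain r e where r: "prime r" "e > 0" "q = r ^ e" using assms(1) by (auto simp: primepow_def)
  have pc: "prime CHAR('a)"
    using prime_CHAR_semidom finite_imp_CHAR_pos[where 'a='a] by auto
  have "CHAR('a) dvd r ^ (e * n)" using CHAR_dvd_CARD[where 'a='a] assms(2) r(3)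
    by (simp add: power_mult)
  hence "CHAR('a) dvd r" using pc prime_dvd_power by blast
  hence "CHAR('a) = r" using pc r(1) primes_dvd_imp_eq by blast
  thus ?thesis using pc r by auto
qed


lemma sum_split_aux:
  fixes k j :: nat and g :: "nat \<Rightarrow> 'b::comm_monoid_add"
  shows "(\<Sum>i<k+j. g i) = (\<Sum>i<j. g i) + (\<Sum>i<k. g (i+j))"
  by (induction k) (simp_all add: add_ac)

lemma few_fixed:
  fixes Q :: nat
  assumes "Q \<ge> 2"
  shows "card {y :: 'a :: {field,finite}. y ^ Q = y} \<le> Q"
proof -
  define p :: "'a poly" where "p = monom 1 Q + [:0, -1:]"
  have dq: "degree [:0, -1::'a:] < degree (monom (1::'a) Q)"
    using assms by (simp add: degree_monom_eq)
  have dp: "degree p = Q" unfolding p_def using degree_add_eq_left[OF dq] by (simp add: degree_monom_eq)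
  hence "p \<noteq> 0" using assms by auto
  hence "card {x. poly p x = 0} \<le> Q" using card_poly_roots_bound[of p] dp by simp
  moreover have "{x. poly p x = 0} = {y. y ^ Q = y}" by (auto simp: p_def poly_monom)
  ultimately show ?thesis by simp
qed

theorem mainTheorem6:
  fixes q s t k n :: nat and \<alpha> \<beta> \<gamma> \<delta> :: "'a::{field,finite}"
  assumes "primepow q" and "odd q"
    and "k \<ge> 1" and "n = 2 * k"
    and "card (UNIV :: 'a set) = q ^ n"
    and "\<delta> ^ (q ^ k) = \<delta>" and "\<gamma> ^ (q ^ k) = \<gamma>"
    and "\<alpha> ^ (q ^ k) = - \<alpha>" and "\<beta> ^ (q ^ k) = - \<beta>"
  shows "bij (\<lambda>x. \<alpha> * (x ^ (q ^ k) + x + \<delta>) ^ t + \<beta> * field_trace q n x + \<gamma> * x ^ (q ^ s))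
         \<longleftrightarrow> \<gamma> \<noteq> 0"
proof -
  have npos: "n > 0" using assms(3,4) by simp
  obtain m where pc: "prime CHAR('a)" and qm: "q = CHAR('a) ^ m"
    using char_setup[OF assms(1) assms(5) npos] by blast
  have qpos: "q > 0" using assms(1) primepow_gt_0_nat by blast
  have q3: "q \<ge> 3" using assms(1,2) primepow_gt_Suc_0[of q] by presburger
  have dream: "(a + b) ^ (q ^ j) = a ^ (q ^ j) + b ^ (q ^ j)" for a b :: 'a and j
    by (rule freshmans_dream'[OF pc, of _ "m * j"]) (simp add: qm power_mult)
  have dream_sum: "sum g A ^ (q ^ j) = (\<Sum>i\<in>A. g i ^ (q ^ j))" for g :: "nat \<Rightarrow> 'a" and A j
    by (rule freshmans_dream_sum'[OF pc, of _ "m * j"]) (simp add: qm power_mult)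
  have neg: "(- a) ^ (q ^ j) = - (a ^ (q ^ j))" for a :: 'a and j
  proof -
    have "0 = (a + - a) ^ (q ^ j)" using qpos by simp
    also have "\<dots> = a ^ (q ^ j) + (- a) ^ (q ^ j)" by (rule dream)
    finally show ?thesis by (simp add: eq_neg_iff_add_eq_0 add.commute)
  qed
  have idem: "x ^ (q ^ n) = x" for x :: 'a using ff_pow_card[of x] assms(5) by simp
  have idem_iter: "x ^ (q ^ (n * j)) = x" for x :: 'a and j
  proof (induction j)
    case (Suc j)
    have "x ^ (q ^ (n * Suc j)) = (x ^ (q ^ n)) ^ (q ^ (n * j))"
      by (simp add: power_add power_mult)
    thus ?case using Suc idem by simp
  qed simp
  define Q where "Q = q ^ k"
  have FF: "(x ^ Q) ^ Q = x" for x :: 'a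
    using idem[of x] by (simp add: Q_def assms(4) flip: power_mult power_add mult_2)
  have Q3: "Q \<ge> 3"
  proof -
    have "q ^ 1 \<le> q ^ k" by (rule power_increasing) (use assms(3) qpos in auto)
    thus ?thesis using q3 by (simp add: Q_def)
  qed
  define T where "T x = x ^ Q + x" for x :: 'a
  have FT: "(T x) ^ Q = T x" for x
    unfolding T_def Q_def using dream[of "x ^ q ^ k" x k] FF[of x] by (simp add: Q_def add.commute)
  have Trq: "field_trace q n x ^ q = field_trace q n x" for x :: 'a
  proof -
    define g where "g i = x ^ (q ^ i)" for i
    have "field_trace q n x ^ q = (\<Sum>i<n. g i ^ (q ^ 1))"
      unfolding field_trace_def g_def using dream_sum[of _ _ 1] by simp
    also have "\<dots> = (\<Sum>i<n. g (Suc i))" by (simp add: g_def power_mult[symmetric] mult.commute)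
    also have "\<dots> = (\<Sum>i<n. g i)"
    proof -
      have "(\<Sum>i<Suc n. g i) = g 0 + (\<Sum>i<n. g (Suc i))" by (rule sum.lessThan_Suc_shift)
      moreover have "(\<Sum>i<Suc n. g i) = (\<Sum>i<n. g i) + g n" by simp
      moreover have "g n = g 0" using idem by (simp add: g_def)
      ultimately show ?thesis by (simp add: add.commute)
    qed
    finally show ?thesis unfolding field_trace_def g_def .
  qed
  have Trit: "field_trace q n x ^ (q ^ j) = field_trace q n x" for x :: 'a and j
  proof (induction j)
    case (Suc j)
    have "field_trace q n x ^ (q ^ Suc j) = (field_trace q n x ^ q) ^ (q ^ j)"
      by (simp add: power_mult)
    thus ?case using Suc Trq by simp
  qed simp
  define f where "f x = \<alpha> * (x ^ (q ^ k) + x + \<delta>) ^ t + \<beta> * field_trace q n x + \<gamma> * x ^ (q ^ s)" for x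
  have Tf: "T (f x) = \<gamma> * (T x) ^ (q ^ s)" for x
  proof -
    define A where "A = (T x + \<delta>) ^ t"
    define B where "B = field_trace q n x"
    have fA: "f x = \<alpha> * A + \<beta> * B + \<gamma> * x ^ (q ^ s)"
      by (simp add: f_def A_def B_def T_def Q_def)
    have AQ: "A ^ Q = A"
    proof -
      have "A ^ Q = ((T x + \<delta>) ^ Q) ^ t" unfolding A_def by (simp flip: power_mult add: mult.commute)
      also have "(T x + \<delta>) ^ Q = T x + \<delta>" using dream[of "T x" \<delta> k] FT[of x] assms(6) by (simp add: Q_def)
      finally show ?thesis by (simp add: A_def)
    qed
    have BQ: "B ^ Q = B" unfolding B_def Q_def by (rule Trit)
    have "f x ^ Q = (\<alpha> * A) ^ Q + (\<beta> * B) ^ Q + (\<gamma> * x ^ (q ^ s)) ^ Q"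
      unfolding fA Q_def by (simp add: dream)
    also have "\<dots> = - (\<alpha> * A) - \<beta> * B + \<gamma> * (x ^ Q) ^ (q ^ s)"
      using AQ BQ assms(7,8,9)
      by (simp add: power_mult_distrib Q_def flip: power_mult) (simp add: mult.commute)
    finally have "T (f x) = \<gamma> * ((x ^ Q) ^ (q ^ s) + x ^ (q ^ s))"
      unfolding T_def fA by (simp add: algebra_simps)
    also have "\<dots> = \<gamma> * (T x) ^ (q ^ s)" unfolding T_def by (simp add: dream)
    finally show ?thesis .
  qed
  have Tr_T: "field_trace q n x = (\<Sum>i<k. T x ^ (q ^ i))" for x
  proof -
    have "field_trace q n x = (\<Sum>i<k. x ^ (q ^ i)) + (\<Sum>i<k. x ^ (q ^ (i + k)))"
      unfolding field_trace_def assms(4) mult_2 by (rule sum_split_aux)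
    also have "\<dots> = (\<Sum>i<k. (x ^ Q) ^ (q ^ i) + x ^ (q ^ i))"
      by (simp add: sum.distrib Q_def power_add add.commute mult.commute flip: power_mult)
    also have "\<dots> = (\<Sum>i<k. T x ^ (q ^ i))" unfolding T_def by (simp add: dream)
    finally show ?thesis .
  qed
  have f_T: "f x = \<alpha> * (T x + \<delta>) ^ t + \<beta> * (\<Sum>i<k. T x ^ (q ^ i)) + \<gamma> * x ^ (q ^ s)" for x
    unfolding f_def Tr_T by (simp add: T_def Q_def)
  have powinj: "inj (\<lambda>y::'a. y ^ (q ^ s))"
  proof (rule inj_on_inverseI)
    fix y :: 'a
    have "(y ^ (q ^ s)) ^ (q ^ (n * s - s)) = y ^ (q ^ (n * s))"
      using npos by (simp flip: power_mult power_add)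
    thus "(y ^ (q ^ s)) ^ (q ^ (n * s - s)) = y" using idem_iter by simp
  qed
  have "bij f \<longleftrightarrow> \<gamma> \<noteq> 0"
  proof
    assume "bij f"
    hence injf: "inj f" by (simp add: bij_def)
    show "\<gamma> \<noteq> 0"
    proof
      assume g0: "\<gamma> = 0"
      have "inj T"
      proof (rule injI)
        fix x y assume "T x = T y"
        hence "f x = f y" using g0 by (simp add: f_T)
        thus "x = y" using injf by (simp add: inj_eq)
      qed
      hence "surj T" using finite_UNIV_inj_surj[of T] by simp
      have "UNIV \<subseteq> {y :: 'a. y ^ Q = y}"
      proof
        fix y :: 'a
        obtain x where "y = T x" using \<open>surj T\<close> by (metis surjD)
        thus "y \<in> {y :: 'a. y ^ Q = y}" using FT[of x] by simp
      qed
      hence "card (UNIV :: 'a set) \<le> card {y :: 'a. y ^ Q = y}" by (intro card_mono) auto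
      also have "\<dots> \<le> Q" using few_fixed[of Q] Q3 by simp
      finally have "Q * Q \<le> Q" using assms(4,5) by (simp add: Q_def power_mult power2_eq_square mult.commute)
      moreover have "3 * Q \<le> Q * Q" using Q3 by simp
      ultimately show False using Q3 by linarith
    qed
  next
    assume g0: "\<gamma> \<noteq> 0"
    have "inj f"
    proof (rule injI)
      fix x y assume fxy: "f x = f y"
      have "T x ^ (q ^ s) = T y ^ (q ^ s)" using Tf[of x] Tf[of y] fxy g0 by simp
      hence Txy: "T x = T y" using injD[OF powinj] by blast
      hence "\<gamma> * x ^ (q ^ s) = \<gamma> * y ^ (q ^ s)" using fxy by (simp add: f_T)
      hence "x ^ (q ^ s) = y ^ (q ^ s)" using g0 by simp
      thus "x = y" using injD[OF powinj] by blast
    qed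
    thus "bij f" using finite_UNIV_inj_surj[of f] by (auto simp: bij_def)
  qed
  thus ?thesis unfolding f_def[abs_def] .
qed
end
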